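(* Let $\rho=|\psi\rangle\langle\psi|$ be an $n$-qubit pure state and $S\subseteq[n]$ non-empty with $s=|S|$. Let $\{p_j,|\phi_j\rangle\}_{j=1}^N$ be a single-qubit projective 2-design. For $\mathbf{q}\in\{1,\dots,N\}^s$ let $|\Phi_{\mathbf{q}}\rangle\langle\Phi_{\mathbf{q}}|=\bigotimes_{i\in S}|\phi_{q_i}\rangle\langle\phi_{q_i}|$ (acting on the qubits in $S$, identity elsewhere), and let $\Phi$ denote the random choice of $\mathbf{q}$ with the $q_i$ independent and each distributed according to $(p_j)_j$. Then $$\mathcal{C}_{|\psi\rangle}(S)=1-3^s\,\mathbb{E}_\Phi\big[\operatorname{tr}(\rho|\Phi\rangle\langle\Phi|)^2\big].$$
   Context: $[n]=\{1,\dots,n\}$ labels the qubits. For an $n$-qubit pure state $|\psi\rangle$ and a non-empty $S\subseteq[n]$ with $s=|S|$, the concentratable entanglement is $\mathcal{C}_{|\psi\rangle}(S)=1-\frac{1}{2^s}\sum_{\alpha\subseteq S}\operatorname{tr}(\rho_\alpha^2)$, where $\rho_\alpha$ is the reduced state of $|\psi\rangle\langle\psi|$ on the qubits in $\alpha$, and $\operatorname{tr}(\rho_\emptyset^2):=1$. A single-qubit projective 2-design is a probability distribution $\{p_j,|\phi_j\rangle\}_{j=1}^N$ over single-qubit pure states such that $\sum_j p_j(|\phi_j\rangle\langle\phi_j|)^{\otimes2}=\int(|\psi\rangle\langle\psi|)^{\otimes 2}\,d\psi$, the integral being over the Haar (unitarily invariant) measure on single-qubit pure states. *)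

theory Defs
  imports "HOL-Analysis.Analysis"
begin

text \<open>Qubits are indexed by a finite type 'n (so n = CARD('n)); computational basis
states are bit assignments 'n \<Rightarrow> bool; a pure state is an amplitude function.\<close>

definition conf :: "'n set \<Rightarrow> ('n \<Rightarrow> bool) set" where
  "conf A = {a. \<forall>i. i \<notin> A \<longrightarrow> a i = False}"

definition merge :: "'n set \<Rightarrow> ('n \<Rightarrow> bool) \<Rightarrow> ('n \<Rightarrow> bool) \<Rightarrow> ('n \<Rightarrow> bool)" where
  "merge A a c = (\<lambda>i. if i \<in> A then a i else c i)"

definition reduced :: "(('n::finite \<Rightarrow> bool) \<Rightarrow> complex) \<Rightarrow> 'n set \<Rightarrow> ('n \<Rightarrow> bool) \<Rightarrow> ('n \<Rightarrow> bool) \<Rightarrow> complex" where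
  "reduced \<psi> A a b = (\<Sum>c\<in>conf (- A). \<psi> (merge A a c) * cnj (\<psi> (merge A b c)))"

text \<open>tr(rho_A^2), with the convention tr(rho_empty^2) = 1.\<close>
definition purity :: "(('n::finite \<Rightarrow> bool) \<Rightarrow> complex) \<Rightarrow> 'n set \<Rightarrow> complex" where
  "purity \<psi> A = (if A = {} then 1 else
     (\<Sum>a\<in>conf A. \<Sum>b\<in>conf A. reduced \<psi> A a b * reduced \<psi> A b a))"

definition conc_ent :: "(('n::finite \<Rightarrow> bool) \<Rightarrow> complex) \<Rightarrow> 'n set \<Rightarrow> complex" where
  "conc_ent \<psi> S = 1 - (1 / 2 ^ card S) * (\<Sum>A\<in>Pow S. purity \<psi> A)"

text \<open>Haar (unitarily invariant) second moment of single-qubit pure states: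
  entry <a b| E[(|psi><psi|)^{(x)2}] |c d>.  The Haar measure on unit vectors of C^2
  is realised as the radial projection of the uniform distribution on the unit ball of C^2.\<close>
definition qcomp :: "complex \<times> complex \<Rightarrow> bool \<Rightarrow> complex" where
  "qcomp z b = (if b then snd z else fst z)"

definition haar_moment :: "bool \<Rightarrow> bool \<Rightarrow> bool \<Rightarrow> bool \<Rightarrow> complex" where
  "haar_moment a b c d =
     integral (ball (0::complex \<times> complex) 1)
       (\<lambda>z. qcomp z a * qcomp z b * cnj (qcomp z c) * cnj (qcomp z d) / of_real (norm z ^ 4))
     / of_real (measure lborel (ball (0::complex \<times> complex) 1))"

definition is_2design :: "nat \<Rightarrow> (nat \<Rightarrow> real) \<Rightarrow> (nat \<Rightarrow> bool \<Rightarrow> complex) \<Rightarrow> bool" where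
  "is_2design N p \<phi> \<longleftrightarrow>
     (\<forall>j\<in>{1..N}. p j \<ge> 0) \<and> (\<Sum>j=1..N. p j) = 1 \<and>
     (\<forall>j\<in>{1..N}. (cmod (\<phi> j False))^2 + (cmod (\<phi> j True))^2 = 1) \<and>
     (\<forall>a b c d. (\<Sum>j=1..N. of_real (p j) * (\<phi> j a * \<phi> j b * cnj (\<phi> j c) * cnj (\<phi> j d)))
                 = haar_moment a b c d)"

definition proj :: "'n set \<Rightarrow> (nat \<Rightarrow> bool \<Rightarrow> complex) \<Rightarrow> ('n \<Rightarrow> nat) \<Rightarrow> ('n::finite \<Rightarrow> bool) \<Rightarrow> ('n \<Rightarrow> bool) \<Rightarrow> complex" where
  "proj S \<phi> q x y = (\<Prod>i\<in>S. \<phi> (q i) (x i) * cnj (\<phi> (q i) (y i))) *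
                     (\<Prod>i\<in>- S. if x i = y i then 1 else 0)"

text \<open>tr(rho |Phi_q><Phi_q|) with rho = |psi><psi|, rho_{y x} = psi y * cnj (psi x).\<close>
definition tr_proj :: "(('n::finite \<Rightarrow> bool) \<Rightarrow> complex) \<Rightarrow> 'n set \<Rightarrow> (nat \<Rightarrow> bool \<Rightarrow> complex) \<Rightarrow> ('n \<Rightarrow> nat) \<Rightarrow> complex" where
  "tr_proj \<psi> S \<phi> q = (\<Sum>x\<in>UNIV. \<Sum>y\<in>UNIV. \<psi> y * cnj (\<psi> x) * proj S \<phi> q x y)"

end

theory Submission
  imports Defs "HOL-Library.FuncSet"
begin

lemma fiber_pres:
  fixes h :: "'a::euclidean_space \<Rightarrow> 'b::euclidean_space \<Rightarrow> 'b"
  assumes meas: "(\<lambda>z. (fst z, h (fst z) (snd z))) \<in> borel_measurable borel"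
    and hm: "\<And>x. h x \<in> borel_measurable borel"
    and hd: "\<And>x. distr lborel borel (h x) = lborel"
  shows "distr lborel borel (\<lambda>z. (fst z, h (fst z) (snd z))) = (lborel :: ('a\<times>'b) measure)"
proof (rule measure_eqI)
  show "sets (distr lborel borel (\<lambda>z. (fst z, h (fst z) (snd z)))) = sets (lborel :: ('a\<times>'b) measure)"
    by simp
next
  fix A :: "('a\<times>'b) set"
  assume "A \<in> sets (distr lborel borel (\<lambda>z. (fst z, h (fst z) (snd z))))"
  then have A: "A \<in> sets borel" by simp
  let ?T = "(\<lambda>z::'a\<times>'b. (fst z, h (fst z) (snd z)))"
  have TA: "?T -` A \<in> sets (lborel \<Otimes>\<^sub>M lborel :: ('a\<times>'b) measure)"
    using meas A unfolding lborel_prod by (auto simp: measurable_def)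
  have AA: "A \<in> sets (lborel \<Otimes>\<^sub>M lborel :: ('a\<times>'b) measure)"
    using A unfolding lborel_prod by simp
  have "emeasure (distr lborel borel ?T) A = emeasure lborel (?T -` A)"
    using A meas by (simp add: emeasure_distr)
  also have "\<dots> = emeasure (lborel \<Otimes>\<^sub>M lborel) (?T -` A)"
    by (simp add: lborel_prod)
  also have "\<dots> = (\<integral>\<^sup>+x. emeasure lborel (Pair x -` (?T -` A)) \<partial>lborel)"
    by (rule sigma_finite_measure.emeasure_pair_measure_alt[OF sigma_finite_lborel TA])
  also have "\<dots> = (\<integral>\<^sup>+x. emeasure lborel (Pair x -` A) \<partial>lborel)"
  proof (rule nn_integral_cong)
    fix x :: 'a
    have P: "Pair x -` A \<in> sets borel"
      using sets_Pair1[OF AA] by simp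
    have "Pair x -` (?T -` A) = h x -` (Pair x -` A)" by auto
    then have "emeasure lborel (Pair x -` (?T -` A)) = emeasure (distr lborel borel (h x)) (Pair x -` A)"
      using P hm by (simp add: emeasure_distr)
    also have "\<dots> = emeasure lborel (Pair x -` A)" by (simp add: hd)
    finally show "emeasure lborel (Pair x -` (?T -` A)) = emeasure lborel (Pair x -` A)" .
  qed
  also have "\<dots> = emeasure (lborel \<Otimes>\<^sub>M lborel) A"
    by (rule sigma_finite_measure.emeasure_pair_measure_alt[OF sigma_finite_lborel AA, symmetric])
  also have "\<dots> = emeasure lborel A" by (simp add: lborel_prod)
  finally show "emeasure (distr lborel borel ?T) A = emeasure lborel A" .
qed

lemma mult_i_pres: "distr lborel borel (\<lambda>z. \<i> * z) = (lborel :: complex measure)"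
proof (rule lborel_eqI[symmetric])
  fix l u :: complex
  assume le: "\<And>b. b \<in> Basis \<Longrightarrow> l \<bullet> b \<le> u \<bullet> b"
  have eq: "(\<lambda>z. \<i> * z) -` box l u = box (Complex (Im l) (- Re u)) (Complex (Im u) (- Re l))"
    by (auto simp: box_def Basis_complex_def inner_complex_def)
  have le2: "Re l \<le> Re u" "Im l \<le> Im u" using le[of 1] le[of \<i>] by (auto simp: Basis_complex_def)
  have "emeasure (distr lborel borel (\<lambda>z. \<i> * z)) (box l u) = emeasure lborel ((\<lambda>z. \<i> * z) -` box l u)"
    by (simp add: emeasure_distr)
  also have "\<dots> = ennreal ((Im u - Im l) * (Re u - Re l))"
    unfolding eq using le2 by (simp add: emeasure_lborel_box_eq Basis_complex_def inner_complex_def)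
  also have "\<dots> = (\<Prod>b\<in>Basis. (u - l) \<bullet> b)"
    using le2 by (simp add: Basis_complex_def inner_complex_def ennreal_mult' mult.commute)
  finally show "emeasure (distr lborel borel (\<lambda>z. \<i> * z)) (box l u) = (\<Prod>b\<in>Basis. (u - l) \<bullet> b)" .
qed simp

definition pres :: "(complex \<times> complex \<Rightarrow> complex \<times> complex) \<Rightarrow> bool" where
  "pres T \<longleftrightarrow> T \<in> borel_measurable borel \<and> distr lborel borel T = lborel"

lemma pres_comp: "pres f \<Longrightarrow> pres g \<Longrightarrow> pres (g \<circ> f)"
  unfolding pres_def
proof (intro conjI)
  assume f: "f \<in> borel_measurable borel \<and> distr lborel borel f = lborel"
     and g: "g \<in> borel_measurable borel \<and> distr lborel borel g = lborel"
  show "g \<circ> f \<in> borel_measurable borel" using f g by (auto intro: measurable_comp)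
  have "distr lborel borel (g \<circ> f) = distr (distr lborel borel f) borel g"
    using f g by (subst distr_distr) auto
  also have "\<dots> = lborel" using f g by simp
  finally show "distr lborel borel (g \<circ> f) = lborel" .
qed

lemma pres_swap: "pres (\<lambda>z. (snd z, fst z))"
  unfolding pres_def
proof
  show "(\<lambda>z::complex\<times>complex. (snd z, fst z)) \<in> borel_measurable borel" by (intro borel_measurable_continuous_onI continuous_intros)
  have psf: "pair_sigma_finite lborel (lborel :: complex measure)"
    by (simp add: pair_sigma_finite_def sigma_finite_lborel)
  have "lborel \<Otimes>\<^sub>M lborel = distr (lborel \<Otimes>\<^sub>M lborel) (lborel \<Otimes>\<^sub>M lborel) (\<lambda>(x::complex, y::complex). (y, x))"
    by (rule pair_sigma_finite.distr_pair_swap[OF psf])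
  then have "(lborel :: (complex\<times>complex) measure) = distr lborel lborel (\<lambda>(x::complex, y::complex). (y, x))"
    by (simp add: lborel_prod)
  also have "\<dots> = distr lborel borel (\<lambda>z::complex\<times>complex. (snd z, fst z))"
    by (rule distr_cong) (auto simp: case_prod_beta)
  finally show "distr lborel borel (\<lambda>z::complex\<times>complex. (snd z, fst z)) = lborel" by simp
qed

lemma pres_phase: "pres (\<lambda>z. (fst z, \<i> * snd z))"
  unfolding pres_def
proof
  show "(\<lambda>z::complex\<times>complex. (fst z, \<i> * snd z)) \<in> borel_measurable borel" by (intro borel_measurable_continuous_onI continuous_intros)
  show "distr lborel borel (\<lambda>z::complex\<times>complex. (fst z, \<i> * snd z)) = lborel"
    using fiber_pres[of "\<lambda>(x::complex) (y::complex). \<i> * y"] mult_i_pres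
    by (simp add: borel_measurable_continuous_onI continuous_intros)
qed

lemma pres_L: "pres (\<lambda>z. (fst z, snd z + b * fst z))"
  unfolding pres_def
proof
  show "(\<lambda>z::complex\<times>complex. (fst z, snd z + b * fst z)) \<in> borel_measurable borel" by (intro borel_measurable_continuous_onI continuous_intros)
  have d: "distr lborel borel (\<lambda>y. y + b * x) = (lborel::complex measure)" for x :: complex
  proof -
    have "(\<lambda>y. y + b * x) = (+) (b * x)" by (auto simp: fun_eq_iff add.commute)
    then show ?thesis using lborel_distr_plus[of "b * x"] by simp
  qed
  show "distr lborel borel (\<lambda>z::complex\<times>complex. (fst z, snd z + b * fst z)) = lborel"
    using fiber_pres[of "\<lambda>(x::complex) (y::complex). y + b * x"] d
    by (simp add: borel_measurable_continuous_onI continuous_intros)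
qed

lemma pres_U: "pres (\<lambda>z. (fst z + a * snd z, snd z))"
proof -
  have "pres ((\<lambda>z. (snd z, fst z)) \<circ> ((\<lambda>z. (fst z, snd z + a * fst z)) \<circ> (\<lambda>z. (snd z, fst z))))"
    by (intro pres_comp pres_swap pres_L)
  moreover have "((\<lambda>z. (snd z, fst z)) \<circ> ((\<lambda>z. (fst z, snd z + a * fst z)) \<circ> (\<lambda>z. (snd z, fst z))))
     = (\<lambda>z. (fst z + a * snd z, snd z))" by (auto simp: fun_eq_iff)
  ultimately show ?thesis by simp
qed

definition cc :: complex where "cc = of_real (sqrt 2 / 2)"

lemma cc_sq: "cc * cc = 1/2"
proof -
  have r: "(sqrt 2 / 2) * (sqrt 2 / 2) = (1/2::real)" by (simp add: field_simps)
  have "cc * cc = of_real ((sqrt 2 / 2) * (sqrt 2 / 2))" by (simp only: cc_def of_real_mult)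
  also have "\<dots> = 1/2" by (simp only: r) simp
  finally show ?thesis .
qed

lemma cnj_cc: "cnj cc = cc" by (simp add: cc_def)

lemma pres_R: "pres (\<lambda>z. (cc * (fst z - snd z), cc * (fst z + snd z)))"
proof -
  define a :: complex where "a = of_real (1 - sqrt 2)"
  define b :: complex where "b = of_real (sqrt 2 / 2)"
  have r1: "(1::real) + (1 - sqrt 2) * (sqrt 2 / 2) = sqrt 2 / 2"
    by (simp add: field_simps)
  have r2: "(1 - sqrt 2) + (1 - sqrt 2) * (1 + (1 - sqrt 2) * (sqrt 2 / 2)) = - (sqrt 2 / 2)"
    by (simp add: field_simps)
  have c1: "1 + a * b = cc"
    using arg_cong[OF r1, of "of_real :: real \<Rightarrow> complex"] by (simp add: a_def b_def cc_def)
  have c2: "a + a * (1 + a * b) = - cc"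
    using arg_cong[OF r2, of "of_real :: real \<Rightarrow> complex"] by (simp add: a_def b_def cc_def)
  have "pres ((\<lambda>z. (fst z + a * snd z, snd z)) \<circ> ((\<lambda>z. (fst z, snd z + b * fst z)) \<circ> (\<lambda>z. (fst z + a * snd z, snd z))))"
    by (intro pres_comp pres_U pres_L)
  moreover have "((\<lambda>z. (fst z + a * snd z, snd z)) \<circ> ((\<lambda>z. (fst z, snd z + b * fst z)) \<circ> (\<lambda>z. (fst z + a * snd z, snd z))))
     = (\<lambda>z. (cc * (fst z - snd z), cc * (fst z + snd z)))"
  proof (rule ext)
    fix z :: "complex \<times> complex"
    obtain x y where z: "z = (x, y)" by (cases z)
    have e1: "x + a * y + a * (y + b * (x + a * y)) = cc * (x - y)"
    proof -
      have "x + a * y + a * (y + b * (x + a * y)) = (1 + a * b) * x + (a + a * (1 + a * b)) * y"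
        by (simp add: algebra_simps)
      also have "\<dots> = cc * x + (- cc) * y" using c2 by (simp only: c1)
      finally show ?thesis by (simp add: algebra_simps)
    qed
    have e2: "y + b * (x + a * y) = cc * (x + y)"
    proof -
      have "y + b * (x + a * y) = b * x + (1 + a * b) * y" by (simp add: algebra_simps)
      also have "\<dots> = cc * x + cc * y" by (simp only: c1) (simp add: b_def cc_def)
      finally show ?thesis by (simp add: algebra_simps)
    qed
    show "((\<lambda>z. (fst z + a * snd z, snd z)) \<circ> ((\<lambda>z. (fst z, snd z + b * fst z)) \<circ> (\<lambda>z. (fst z + a * snd z, snd z)))) z
      = (\<lambda>z. (cc * (fst z - snd z), cc * (fst z + snd z))) z"
      using e1 e2 by (simp add: z)
  qed
  ultimately show ?thesis by simp
qed

definition Bl :: "(complex \<times> complex) set" where "Bl = ball 0 1"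

definition hf :: "bool \<Rightarrow> bool \<Rightarrow> bool \<Rightarrow> bool \<Rightarrow> complex \<times> complex \<Rightarrow> complex" where
  "hf a b c d z = qcomp z a * qcomp z b * cnj (qcomp z c) * cnj (qcomp z d) / of_real (norm z ^ 4)"

definition J :: "(complex \<times> complex \<Rightarrow> complex) \<Rightarrow> complex" where
  "J g = integral\<^sup>L lborel (\<lambda>z. indicator Bl z *\<^sub>R g z)"

lemma qcomp_meas: "(\<lambda>z. qcomp z a) \<in> borel_measurable borel"
  by (cases a) (simp_all add: qcomp_def borel_measurable_continuous_onI continuous_intros)

lemma qcomp_cnj_meas: "(\<lambda>z. cnj (qcomp z a)) \<in> borel_measurable borel"
  by (cases a) (simp_all add: qcomp_def borel_measurable_continuous_onI continuous_intros)

lemma nrm_meas: "(\<lambda>z::complex\<times>complex. complex_of_real (norm z ^ 4)) \<in> borel_measurable borel"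
  by (simp add: borel_measurable_continuous_onI continuous_intros)

lemma hf_meas: "hf a b c d \<in> borel_measurable borel"
proof -
  have "(\<lambda>z. qcomp z a * qcomp z b * cnj (qcomp z c) * cnj (qcomp z d) / of_real (norm z ^ 4)) \<in> borel_measurable borel"
    using qcomp_meas[of a] qcomp_meas[of b] qcomp_cnj_meas[of c] qcomp_cnj_meas[of d] nrm_meas by measurable
  then show ?thesis unfolding hf_def[abs_def] .
qed

lemma qcomp_le: "norm (qcomp z a) \<le> norm z"
  by (cases z; cases a) (simp_all add: qcomp_def norm_fst_le norm_snd_le)

lemma hf_bound: "norm (hf a b c d z) \<le> 1"
proof (cases "z = 0")
  case True then show ?thesis by (simp add: hf_def)
next
  case False
  then have p: "norm z ^ 4 > 0" by simp
  have "norm (qcomp z a * qcomp z b * cnj (qcomp z c) * cnj (qcomp z d))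
        = norm (qcomp z a) * norm (qcomp z b) * norm (qcomp z c) * norm (qcomp z d)"
    by (simp add: norm_mult)
  also have "\<dots> \<le> norm z * norm z * norm z * norm z"
    by (intro mult_mono qcomp_le) auto
  also have "\<dots> = norm z ^ 4" by (simp add: power4_eq_xxxx)
  finally have n: "norm (qcomp z a * qcomp z b * cnj (qcomp z c) * cnj (qcomp z d)) \<le> norm z ^ 4" .
  have "norm (hf a b c d z) = norm (qcomp z a * qcomp z b * cnj (qcomp z c) * cnj (qcomp z d)) / norm z ^ 4"
    by (simp add: hf_def norm_divide norm_power)
  also have "\<dots> \<le> 1" using n p by simp
  finally show ?thesis .
qed

lemma Bl_sets: "Bl \<in> sets lborel" by (simp add: Bl_def)

lemma int_bounded:
  assumes "g \<in> borel_measurable borel" "\<And>z. norm (g z) \<le> K"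
  shows "integrable lborel (\<lambda>z. indicator Bl z *\<^sub>R (g z :: complex))"
proof (rule integrableI_bounded_set_indicator[where B=K])
  show "Bl \<in> sets lborel" by (simp add: Bl_def)
  show "g \<in> borel_measurable lborel" using assms(1) by simp
  show "emeasure lborel Bl < \<infinity>" unfolding Bl_def by (rule emeasure_lborel_ball_finite)
  show "AE x in lborel. x \<in> Bl \<longrightarrow> norm (g x) \<le> K" using assms(2) by simp
qed

lemma int_hf: "integrable lborel (\<lambda>z. indicator Bl z *\<^sub>R hf a b c d z)"
  by (rule int_bounded[OF hf_meas hf_bound])

lemma J_inv:
  assumes "pres T" "\<And>z. norm (T z) = norm z" "g \<in> borel_measurable borel"
  shows "J (\<lambda>z. g (T z)) = J g"
proof -
  have T: "T \<in> borel_measurable borel" and d: "distr lborel borel T = lborel"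
    using assms(1) by (auto simp: pres_def)
  have gm: "(\<lambda>z. indicator Bl z *\<^sub>R g z) \<in> borel_measurable borel"
    unfolding Bl_def by (intro borel_measurable_scaleR borel_measurable_indicator assms(3)) simp
  have "J g = integral\<^sup>L (distr lborel borel T) (\<lambda>z. indicator Bl z *\<^sub>R g z)"
    by (simp add: J_def d)
  also have "\<dots> = integral\<^sup>L lborel (\<lambda>z. indicator Bl (T z) *\<^sub>R g (T z))"
    using T gm by (subst integral_distr) auto
  also have "\<dots> = J (\<lambda>z. g (T z))"
    unfolding J_def by (simp add: Bl_def assms(2) indicator_def)
  finally show ?thesis by simp
qed

lemma J_mult: "J (\<lambda>z. k * g z) = k * J g"
proof -
  have "(\<lambda>z. indicator Bl z *\<^sub>R (k * g z)) = (\<lambda>z. k * (indicator Bl z *\<^sub>R g z))"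
    by (auto simp: fun_eq_iff)
  then show ?thesis unfolding J_def by (simp only:) (rule integral_mult_right_zero)
qed

lemma J_sum:
  assumes "finite I" "\<And>i. i \<in> I \<Longrightarrow> integrable lborel (\<lambda>z. indicator Bl z *\<^sub>R f i z)"
  shows "J (\<lambda>z. \<Sum>i\<in>I. f i z) = (\<Sum>i\<in>I. J (f i))"
proof -
  have e: "(\<lambda>z. indicator Bl z *\<^sub>R (\<Sum>i\<in>I. f i z)) = (\<lambda>z. \<Sum>i\<in>I. indicator Bl z *\<^sub>R f i z)"
    by (simp add: scaleR_sum_right)
  show ?thesis unfolding J_def e by (rule Bochner_Integration.integral_sum) (use assms in blast)
qed

lemma haar_eq: "haar_moment a b c d = J (hf a b c d) / of_real (measure lborel Bl)"
proof -
  have si: "set_integrable lborel Bl (hf a b c d)"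
    unfolding set_integrable_def by (rule int_hf)
  have "integral Bl (hf a b c d) = (LINT x:Bl|lborel. hf a b c d x)"
    using set_borel_integral_eq_integral(2)[OF si] by simp
  then show ?thesis
    unfolding haar_moment_def J_def set_lebesgue_integral_def
    by (simp add: Bl_def[symmetric] hf_def[abs_def])
qed

definition ph :: "bool \<Rightarrow> complex" where "ph x = (if x then \<i> else 1)"

lemma hf_phase: "hf a b c d (fst z, \<i> * snd z) = (ph a * ph b * cnj (ph c) * cnj (ph d)) * hf a b c d z"
proof -
  have n: "norm (fst z, \<i> * snd z) = norm z"
    by (cases z) (simp add: norm_Pair norm_mult)
  have q: "qcomp (fst z, \<i> * snd z) x = ph x * qcomp z x" for x
    by (cases x) (simp_all add: qcomp_def ph_def)
  show ?thesis unfolding hf_def n q by (simp add: algebra_simps)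
qed

lemma v_zero:
  assumes "\<not> ((a = c \<and> b = d) \<or> (a = d \<and> b = c))"
  shows "J (hf a b c d) = 0"
proof -
  let ?k = "ph a * ph b * cnj (ph c) * cnj (ph d)"
  have "J (hf a b c d) = J (\<lambda>z. hf a b c d (fst z, \<i> * snd z))"
    by (rule J_inv[symmetric]) (simp_all add: pres_phase hf_meas, metis norm_Pair norm_mult mult_1 norm_ii prod.collapse)
  also have "\<dots> = ?k * J (hf a b c d)"
    by (simp add: hf_phase J_mult)
  finally have e: "(1 - ?k) * J (hf a b c d) = 0" by (simp add: algebra_simps)
  have "?k \<noteq> 1" using assms
    by (cases a; cases b; cases c; cases d) (simp_all add: ph_def complex_eq_iff)
  then show ?thesis using e by simp
qed

definition IB :: "(complex \<times> complex \<Rightarrow> complex) \<Rightarrow> bool" where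
  "IB g \<longleftrightarrow> integrable lborel (\<lambda>z. indicator Bl z *\<^sub>R g z)"

lemma IB_hf[simp]: "IB (hf a b c d)" by (simp add: IB_def int_hf)

lemma IB_mult[simp]: "IB f \<Longrightarrow> IB (\<lambda>z. k * f z)"
proof -
  assume "IB f"
  then have "integrable lborel (\<lambda>z. k * (indicator Bl z *\<^sub>R f z))" unfolding IB_def by (rule integrable_mult_right)
  moreover have "(\<lambda>z. k * (indicator Bl z *\<^sub>R f z)) = (\<lambda>z. indicator Bl z *\<^sub>R (k * f z))"
    by (auto simp: fun_eq_iff)
  ultimately show ?thesis by (simp add: IB_def)
qed

lemma IB_sum[simp]: "(\<And>i. IB (f i)) \<Longrightarrow> IB (\<lambda>z. \<Sum>i\<in>I. f i z)"
proof -
  assume a: "\<And>i. IB (f i)"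
  have "(\<lambda>z. indicator Bl z *\<^sub>R (\<Sum>i\<in>I. f i z)) = (\<lambda>z. \<Sum>i\<in>I. indicator Bl z *\<^sub>R f i z)"
    by (simp add: scaleR_sum_right)
  moreover have "integrable lborel (\<lambda>z. \<Sum>i\<in>I. indicator Bl z *\<^sub>R f i z)"
    using a unfolding IB_def by (intro Bochner_Integration.integrable_sum) auto
  ultimately show ?thesis by (simp add: IB_def)
qed

lemma J_sum': "finite I \<Longrightarrow> (\<And>i. IB (f i)) \<Longrightarrow> J (\<lambda>z. \<Sum>i\<in>I. f i z) = (\<Sum>i\<in>I. J (f i))"
  by (rule J_sum) (auto simp: IB_def)

lemma J_add: "IB f \<Longrightarrow> IB g \<Longrightarrow> J (\<lambda>z. f z + g z) = J f + J g"
  unfolding IB_def J_def by (simp add: scaleR_add_right Bochner_Integration.integral_add)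

lemma IB_add[simp]: "IB f \<Longrightarrow> IB g \<Longrightarrow> IB (\<lambda>z. f z + g z)"
  unfolding IB_def by (simp add: scaleR_add_right)

lemma hf_swap: "hf a b c d (snd z, fst z) = hf (\<not>a) (\<not>b) (\<not>c) (\<not>d) z"
proof -
  have n: "norm (snd z, fst z) = norm z" by (cases z) (simp add: norm_Pair add.commute)
  have q: "qcomp (snd z, fst z) x = qcomp z (\<not> x)" for x by (cases x) (simp_all add: qcomp_def)
  show ?thesis unfolding hf_def n q ..
qed

lemma v_swap: "J (hf a b c d) = J (hf (\<not>a) (\<not>b) (\<not>c) (\<not>d))"
proof -
  have "J (\<lambda>z. hf a b c d (snd z, fst z)) = J (hf a b c d)"
    by (rule J_inv) (simp_all add: pres_swap hf_meas, metis norm_Pair add.commute prod.collapse snd_conv fst_conv)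
  then show ?thesis by (simp add: hf_swap)
qed

lemma hf_comm1: "hf a b c d = hf b a c d" by (simp add: hf_def fun_eq_iff mult_ac)
lemma hf_comm2: "hf a b c d = hf a b d c" by (simp add: hf_def fun_eq_iff mult_ac)

lemma sq_cnj: "x * cnj x = complex_of_real (norm x ^ 2)"
  by (metis complex_norm_square of_real_power)

lemma hf_norm_sum: "hf False False False False z + hf False True False True z + hf True False True False z
   + hf True True True True z = (if z = 0 then 0 else 1)"
proof (cases "z = 0")
  case True then show ?thesis by (simp add: hf_def)
next
  case False
  obtain x y where z: "z = (x, y)" by (cases z)
  have n2: "norm z ^ 2 = norm x ^ 2 + norm y ^ 2"
    by (simp add: z norm_Pair)
  have n4: "norm z ^ 4 = (norm x ^ 2 + norm y ^ 2) ^ 2"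
    unfolding n2[symmetric] by (simp flip: power_mult)
  have nz: "norm z ^ 4 \<noteq> 0" using False by simp
  have "x * x * cnj x * cnj x + x * y * cnj x * cnj y + y * x * cnj y * cnj x + y * y * cnj y * cnj y
        = (x * cnj x) * (x * cnj x) + 2 * ((x * cnj x) * (y * cnj y)) + (y * cnj y) * (y * cnj y)"
    by (simp add: algebra_simps)
  also have "\<dots> = complex_of_real (norm z ^ 4)"
    unfolding sq_cnj n4 by (simp add: power2_eq_square algebra_simps)
  finally have e: "x * x * cnj x * cnj x + x * y * cnj x * cnj y + y * x * cnj y * cnj x + y * y * cnj y * cnj y
        = complex_of_real (norm z ^ 4)" .
  have "hf False False False False z + hf False True False True z + hf True False True False z
   + hf True True True True z = (x * x * cnj x * cnj x + x * y * cnj x * cnj y + y * x * cnj y * cnj x + y * y * cnj y * cnj y) / complex_of_real (norm z ^ 4)"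
    by (simp add: hf_def qcomp_def z add_divide_distrib)
  also have "\<dots> = 1" using e nz by simp
  finally show ?thesis using False by simp
qed

lemma V_pos: "measure lborel Bl > 0" by (simp add: Bl_def)

lemma v_norm: "J (hf False False False False) + J (hf False True False True) + J (hf True False True False)
   + J (hf True True True True) = of_real (measure lborel Bl)"
proof -
  have "J (hf False False False False) + J (hf False True False True) + J (hf True False True False)
   + J (hf True True True True) = J (\<lambda>z. hf False False False False z + hf False True False True z + hf True False True False z
   + hf True True True True z)"
    by (simp add: J_add)
  also have "\<dots> = J (\<lambda>z. if z = 0 then 0 else 1)" by (simp only: hf_norm_sum)
  also have "\<dots> = J (\<lambda>z. 1)"
    unfolding J_def
  proof (rule integral_cong_AE)
    have b: "Bl \<in> sets borel" by (simp add: Bl_def)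
    have c0: "(\<lambda>z::complex\<times>complex. if z \<in> {0} then 0 else 1 :: complex) \<in> borel_measurable borel"
      by (rule borel_measurable_continuous_on_if) (auto intro: continuous_on_const)
    have c: "(\<lambda>z::complex\<times>complex. if z = 0 then 0 else 1 :: complex) \<in> borel_measurable borel"
      using c0 by simp
    show "(\<lambda>z. indicator Bl z *\<^sub>R (if z = 0 then 0 else 1 :: complex)) \<in> borel_measurable lborel"
      using b c by simp
    show "(\<lambda>z. indicator Bl z *\<^sub>R (1 :: complex)) \<in> borel_measurable lborel"
      using b by simp
    show "AE z in lborel. indicator Bl z *\<^sub>R (if z = 0 then 0 else 1 :: complex) = indicator Bl z *\<^sub>R 1"
      using AE_lborel_singleton[of 0] by (rule eventually_mono) simp
  qed
  also have "\<dots> = of_real (measure lborel Bl)"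
  proof -
    have "J (\<lambda>z. 1) = (LINT z:Bl|lborel. (1::complex))"
      by (simp add: J_def set_lebesgue_integral_def)
    also have "\<dots> = measure lborel Bl *\<^sub>R 1"
      by (rule set_integral_const) (use emeasure_lborel_ball_finite[of "0::complex\<times>complex" 1] in \<open>simp_all add: Bl_def\<close>)
    finally show ?thesis by (simp add: scaleR_conv_of_real)
  qed
  finally show ?thesis .
qed

definition Rm :: "complex \<times> complex \<Rightarrow> complex \<times> complex" where
  "Rm z = (cc * (fst z - snd z), cc * (fst z + snd z))"

definition sg :: "bool \<Rightarrow> complex" where "sg x = (if x then -1 else 1)"

lemma norm_Rm: "norm (Rm z) = norm z"
proof -
  obtain x y where z: "z = (x, y)" by (cases z)
  have c2: "norm cc ^ 2 = 1/2"
  proof -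
    have "norm cc ^ 2 = norm (cc * cc)" by (simp add: norm_mult power2_eq_square)
    also have "\<dots> = 1/2" by (simp add: cc_sq)
    finally show ?thesis .
  qed
  have pl: "norm (x - y) ^ 2 + norm (x + y) ^ 2 = 2 * (norm x ^ 2 + norm y ^ 2)"
    unfolding cmod_power2 by (simp add: power2_eq_square algebra_simps)
  have "norm (Rm z) ^ 2 = norm z ^ 2"
    by (simp add: Rm_def z norm_Pair norm_mult power_mult_distrib c2 flip: distrib_left) (use pl in simp)
  then show ?thesis by (simp add: power2_eq_iff_nonneg)
qed

lemma hf_rot: "hf False False False False (Rm z) =
   (\<Sum>a\<in>UNIV. \<Sum>b\<in>UNIV. \<Sum>c\<in>UNIV. \<Sum>d\<in>UNIV. (sg a * sg b * sg c * sg d / 4) * hf a b c d z)"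
proof -
  obtain x y where z: "z = (x, y)" by (cases z)
  let ?N = "complex_of_real (norm z ^ 4)"
  have l: "hf False False False False (Rm z) =
     ((cc * cc) * (cc * cc)) * ((x - y) * (x - y) * (cnj x - cnj y) * (cnj x - cnj y)) / ?N"
    unfolding hf_def norm_Rm by (simp add: Rm_def qcomp_def z cnj_cc algebra_simps)
  have r: "(\<Sum>a\<in>UNIV. \<Sum>b\<in>UNIV. \<Sum>c\<in>UNIV. \<Sum>d\<in>UNIV. (sg a * sg b * sg c * sg d / 4) * hf a b c d z)
     = (\<Sum>a\<in>UNIV. \<Sum>b\<in>UNIV. \<Sum>c\<in>UNIV. \<Sum>d\<in>UNIV. (sg a * sg b * sg c * sg d / 4) *
           (qcomp z a * qcomp z b * cnj (qcomp z c) * cnj (qcomp z d))) / ?N"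
    by (simp add: hf_def sum_divide_distrib)
  have p: "(\<Sum>a\<in>UNIV. \<Sum>b\<in>UNIV. \<Sum>c\<in>UNIV. \<Sum>d\<in>UNIV. (sg a * sg b * sg c * sg d / 4) *
           (qcomp z a * qcomp z b * cnj (qcomp z c) * cnj (qcomp z d)))
      = (1/4) * ((x - y) * (x - y) * (cnj x - cnj y) * (cnj x - cnj y))"
    by (simp add: UNIV_bool sg_def qcomp_def z) (simp add: algebra_simps)
  show ?thesis unfolding l r p cc_sq by simp
qed

lemma v_rot: "J (hf False False False False) =
   (\<Sum>a\<in>UNIV. \<Sum>b\<in>UNIV. \<Sum>c\<in>UNIV. \<Sum>d\<in>UNIV. (sg a * sg b * sg c * sg d / 4) * J (hf a b c d))"
proof -
  have pR: "pres Rm" using pres_R by (simp add: Rm_def[abs_def])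
  have "J (hf False False False False) = J (\<lambda>z. hf False False False False (Rm z))"
    by (rule J_inv[symmetric, OF pR norm_Rm hf_meas])
  also have "\<dots> = J (\<lambda>z. \<Sum>a\<in>UNIV. \<Sum>b\<in>UNIV. \<Sum>c\<in>UNIV. \<Sum>d\<in>UNIV. (sg a * sg b * sg c * sg d / 4) * hf a b c d z)"
    by (simp only: hf_rot)
  also have "\<dots> = (\<Sum>a\<in>UNIV. \<Sum>b\<in>UNIV. \<Sum>c\<in>UNIV. \<Sum>d\<in>UNIV. (sg a * sg b * sg c * sg d / 4) * J (hf a b c d))"
    by (simp only: J_sum' J_mult IB_sum IB_mult IB_hf finite_class.finite_UNIV)
  finally show ?thesis .
qed

lemma haar_val: "haar_moment a b c d =
  ((if a = c \<and> b = d then 1 else 0) + (if a = d \<and> b = c then 1 else 0)) / 6"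
proof -
  define m1 where "m1 = J (hf False False False False)"
  define m2 where "m2 = J (hf False True False True)"
  define V where "V = complex_of_real (measure lborel Bl)"
  have V0: "V \<noteq> 0" using V_pos by (simp add: V_def)
  have t1: "J (hf True True True True) = m1" using v_swap[of True True True True] by (simp add: m1_def)
  have t2: "J (hf True False True False) = m2" using v_swap[of True False True False] by (simp add: m2_def)
  have t3: "J (hf False True True False) = m2" by (simp add: m2_def hf_comm2[of False True True False])
  have t4: "J (hf True False False True) = m2" by (simp add: m2_def hf_comm1[of True False False True])
  have nrm: "m1 + m2 + m2 + m1 = V" using v_norm by (simp add: m1_def[symmetric] m2_def[symmetric] t1 t2 V_def)
  have h2: "m1 = 2 * m2"
    using v_rot apply (simp add: UNIV_bool sg_def v_zero t1 t2 t3 t4 m1_def[symmetric] m2_def[symmetric])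
    by (simp add: field_simps)
  have e6: "6 * m2 = V"
  proof -
    have "V = 2 * m2 + m2 + m2 + 2 * m2" using nrm h2 by simp
    also have "\<dots> = 6 * m2" by (simp add: algebra_simps)
    finally show ?thesis by simp
  qed
  have e2: "m2 = V / 6" using e6[symmetric] by simp
  have e1: "m1 = V / 3" unfolding h2 e2 by simp
  show ?thesis
    by (cases a; cases b; cases c; cases d)
       (simp_all add: haar_eq v_zero t1 t2 t3 t4 m1_def[symmetric] m2_def[symmetric] V_def[symmetric] e1 e2 V0)
qed

definition Mv :: "bool \<Rightarrow> bool \<Rightarrow> bool \<Rightarrow> bool \<Rightarrow> complex" where
  "Mv a b c d = ((if a = c \<and> b = d then 1 else 0) + (if a = d \<and> b = c then 1 else 0)) / 6"

definition Dl :: "'n::finite set \<Rightarrow> ('n \<Rightarrow> bool) \<Rightarrow> ('n \<Rightarrow> bool) \<Rightarrow> complex" where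
  "Dl S x y = (\<Prod>i\<in>- S. if x i = y i then 1 else 0)"

definition Qp :: "(nat \<Rightarrow> bool \<Rightarrow> complex) \<Rightarrow> nat \<Rightarrow> bool \<Rightarrow> bool \<Rightarrow> bool \<Rightarrow> bool \<Rightarrow> complex" where
  "Qp \<phi> j a b c d = \<phi> j a * \<phi> j b * cnj (\<phi> j c) * cnj (\<phi> j d)"

definition Kt :: "(('n::finite \<Rightarrow> bool) \<Rightarrow> complex) \<Rightarrow> 'n set \<Rightarrow> ('n \<Rightarrow> bool) \<Rightarrow> ('n \<Rightarrow> bool) \<Rightarrow> ('n \<Rightarrow> bool) \<Rightarrow> ('n \<Rightarrow> bool) \<Rightarrow> complex" where
  "Kt \<psi> S x x' y y' = \<psi> y * cnj (\<psi> x) * (\<psi> y' * cnj (\<psi> x')) * Dl S x y * Dl S x' y'"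

lemma tr_proj_sq:
  fixes \<psi> :: "('n::finite \<Rightarrow> bool) \<Rightarrow> complex"
  shows "(tr_proj \<psi> S \<phi> q)^2 = (\<Sum>x\<in>UNIV. \<Sum>x'\<in>UNIV. \<Sum>y\<in>UNIV. \<Sum>y'\<in>UNIV.
     Kt \<psi> S x x' y y' * (\<Prod>i\<in>S. Qp \<phi> (q i) (x i) (x' i) (y i) (y' i)))"
proof -
  define f where "f x y = \<psi> y * cnj (\<psi> x) * proj S \<phi> q x y" for x y
  have "(tr_proj \<psi> S \<phi> q)^2 = (\<Sum>x\<in>UNIV. \<Sum>y\<in>UNIV. f x y) * (\<Sum>x'\<in>UNIV. \<Sum>y'\<in>UNIV. f x' y')"
    by (simp add: tr_proj_def f_def power2_eq_square)
  also have "\<dots> = (\<Sum>x\<in>UNIV. \<Sum>x'\<in>UNIV. (\<Sum>y\<in>UNIV. f x y) * (\<Sum>y'\<in>UNIV. f x' y'))"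
    by (rule sum_product)
  also have "\<dots> = (\<Sum>x\<in>UNIV. \<Sum>x'\<in>UNIV. \<Sum>y\<in>UNIV. \<Sum>y'\<in>UNIV. f x y * f x' y')"
    by (simp add: sum_product)
  also have "\<dots> = (\<Sum>x\<in>UNIV. \<Sum>x'\<in>UNIV. \<Sum>y\<in>UNIV. \<Sum>y'\<in>UNIV.
     Kt \<psi> S x x' y y' * (\<Prod>i\<in>S. Qp \<phi> (q i) (x i) (x' i) (y i) (y' i)))"
  proof (intro sum.cong refl)
    fix x x' y y' :: "'n \<Rightarrow> bool"
    have "(\<Prod>i\<in>S. \<phi> (q i) (x i) * cnj (\<phi> (q i) (y i))) * (\<Prod>i\<in>S. \<phi> (q i) (x' i) * cnj (\<phi> (q i) (y' i)))
       = (\<Prod>i\<in>S. Qp \<phi> (q i) (x i) (x' i) (y i) (y' i))"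
      by (simp add: Qp_def prod.distrib[symmetric] mult_ac)
    then show "f x y * f x' y' = Kt \<psi> S x x' y y' * (\<Prod>i\<in>S. Qp \<phi> (q i) (x i) (x' i) (y i) (y' i))"
      by (simp add: f_def proj_def Kt_def Dl_def[symmetric] mult_ac)
  qed
  finally show ?thesis .
qed

lemma expect_expand:
  fixes \<psi> :: "('n::finite \<Rightarrow> bool) \<Rightarrow> complex"
  assumes des: "\<And>a b c d. (\<Sum>j=1..N. of_real (p j) * Qp \<phi> j a b c d) = Mv a b c d"
  shows "(\<Sum>q\<in>PiE S (\<lambda>_. {1..N}). of_real (\<Prod>i\<in>S. p (q i)) * (tr_proj \<psi> S \<phi> q)^2)
    = (\<Sum>x\<in>UNIV. \<Sum>x'\<in>UNIV. \<Sum>y\<in>UNIV. \<Sum>y'\<in>UNIV.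
         Kt \<psi> S x x' y y' * (\<Prod>i\<in>S. Mv (x i) (x' i) (y i) (y' i)))"
proof -
  let ?Q = "PiE S (\<lambda>_. {1..N::nat})"
  have "(\<Sum>q\<in>?Q. of_real (\<Prod>i\<in>S. p (q i)) * (tr_proj \<psi> S \<phi> q)^2)
     = (\<Sum>q\<in>?Q. of_real (\<Prod>i\<in>S. p (q i)) * (\<Sum>x\<in>UNIV. \<Sum>x'\<in>UNIV. \<Sum>y\<in>UNIV. \<Sum>y'\<in>UNIV.
     Kt \<psi> S x x' y y' * (\<Prod>i\<in>S. Qp \<phi> (q i) (x i) (x' i) (y i) (y' i))))"
    by (simp only: tr_proj_sq)
  also have "\<dots> = (\<Sum>x\<in>UNIV. \<Sum>x'\<in>UNIV. \<Sum>y\<in>UNIV. \<Sum>y'\<in>UNIV. \<Sum>q\<in>?Q.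
     of_real (\<Prod>i\<in>S. p (q i)) * (Kt \<psi> S x x' y y' * (\<Prod>i\<in>S. Qp \<phi> (q i) (x i) (x' i) (y i) (y' i))))"
    by (simp only: sum_distrib_left sum.swap[of _ ?Q])
  also have "\<dots> = (\<Sum>x\<in>UNIV. \<Sum>x'\<in>UNIV. \<Sum>y\<in>UNIV. \<Sum>y'\<in>UNIV.
         Kt \<psi> S x x' y y' * (\<Prod>i\<in>S. Mv (x i) (x' i) (y i) (y' i)))"
  proof (intro sum.cong refl)
    fix x x' y y' :: "'n \<Rightarrow> bool"
    have fS: "finite S" by simp
    have "(\<Sum>q\<in>?Q. of_real (\<Prod>i\<in>S. p (q i)) * (Kt \<psi> S x x' y y' * (\<Prod>i\<in>S. Qp \<phi> (q i) (x i) (x' i) (y i) (y' i))))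
       = Kt \<psi> S x x' y y' * (\<Sum>q\<in>?Q. \<Prod>i\<in>S. of_real (p (q i)) * Qp \<phi> (q i) (x i) (x' i) (y i) (y' i))"
      by (simp add: sum_distrib_left prod.distrib of_real_prod mult_ac)
    also have "(\<Sum>q\<in>?Q. \<Prod>i\<in>S. of_real (p (q i)) * Qp \<phi> (q i) (x i) (x' i) (y i) (y' i))
        = (\<Prod>i\<in>S. \<Sum>j\<in>{1..N}. of_real (p j) * Qp \<phi> j (x i) (x' i) (y i) (y' i))"
      by (rule prod_sum_PiE[symmetric]) simp_all
    also have "\<dots> = (\<Prod>i\<in>S. Mv (x i) (x' i) (y i) (y' i))"
      by (simp only: des)
    finally show "(\<Sum>q\<in>?Q. of_real (\<Prod>i\<in>S. p (q i)) * (Kt \<psi> S x x' y y' * (\<Prod>i\<in>S. Qp \<phi> (q i) (x i) (x' i) (y i) (y' i))))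
       = Kt \<psi> S x x' y y' * (\<Prod>i\<in>S. Mv (x i) (x' i) (y i) (y' i))" .
  qed
  finally show ?thesis .
qed

lemma prod_ind: "finite I \<Longrightarrow> (\<Prod>i\<in>I. (if P i then 1 else 0::complex)) = (if \<forall>i\<in>I. P i then 1 else 0)"
  by (induction I rule: finite_induct) auto

definition Pa :: "(('n::finite \<Rightarrow> bool) \<Rightarrow> complex) \<Rightarrow> 'n set \<Rightarrow> complex" where
  "Pa \<psi> A = (\<Sum>x\<in>UNIV. \<Sum>x'\<in>UNIV. \<psi> (merge A x' x) * cnj (\<psi> x) * (\<psi> (merge A x x') * cnj (\<psi> x')))"

lemma prod_Mv:
  fixes S :: "'n::finite set"
  shows "(\<Prod>i\<in>S. Mv (x i) (x' i) (y i) (y' i)) = (1/6)^card S *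
    (\<Sum>A\<in>Pow S. (\<Prod>i\<in>A. if x i = y' i \<and> x' i = y i then 1 else 0) *
                (\<Prod>i\<in>S - A. if x i = y i \<and> x' i = y' i then 1 else 0))"
proof -
  have "(\<Prod>i\<in>S. Mv (x i) (x' i) (y i) (y' i)) = (\<Prod>i\<in>S. (1/6) *
     ((if x i = y' i \<and> x' i = y i then 1 else 0) + (if x i = y i \<and> x' i = y' i then 1 else 0)))"
    by (intro prod.cong refl) (simp add: Mv_def)
  also have "\<dots> = (1/6)^card S * (\<Prod>i\<in>S.
     (if x i = y' i \<and> x' i = y i then 1 else 0) + (if x i = y i \<and> x' i = y' i then 1 else 0))"
    by (simp only: prod.distrib prod_constant)
  also have "\<dots> = (1/6)^card S *
    (\<Sum>A\<in>Pow S. (\<Prod>i\<in>A. if x i = y' i \<and> x' i = y i then 1 else 0) *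
                (\<Prod>i\<in>S - A. if x i = y i \<and> x' i = y' i then 1 else 0))"
    by (subst prod_add) simp_all
  finally show ?thesis .
qed

lemma collapse:
  fixes S A :: "'n::finite set"
  assumes "A \<subseteq> S"
  shows "Dl S x y * Dl S x' y' * ((\<Prod>i\<in>A. if x i = y' i \<and> x' i = y i then 1 else 0) *
                (\<Prod>i\<in>S - A. if x i = y i \<and> x' i = y' i then 1 else 0))
     = (if y = merge A x' x \<and> y' = merge A x x' then 1 else 0)"
proof -
  have "Dl S x y * Dl S x' y' * ((\<Prod>i\<in>A. if x i = y' i \<and> x' i = y i then 1 else 0) *
                (\<Prod>i\<in>S - A. if x i = y i \<and> x' i = y' i then 1 else 0))
     = (if (\<forall>i\<in>-S. x i = y i) \<and> (\<forall>i\<in>-S. x' i = y' i) \<and> (\<forall>i\<in>A. x i = y' i \<and> x' i = y i)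
          \<and> (\<forall>i\<in>S - A. x i = y i \<and> x' i = y' i) then 1 else 0)"
    unfolding Dl_def by (simp add: prod_ind)
  moreover have "((\<forall>i\<in>-S. x i = y i) \<and> (\<forall>i\<in>-S. x' i = y' i) \<and> (\<forall>i\<in>A. x i = y' i \<and> x' i = y i)
          \<and> (\<forall>i\<in>S - A. x i = y i \<and> x' i = y' i)) \<longleftrightarrow> (y = merge A x' x \<and> y' = merge A x x')"
  proof
    assume H: "(\<forall>i\<in>-S. x i = y i) \<and> (\<forall>i\<in>-S. x' i = y' i) \<and> (\<forall>i\<in>A. x i = y' i \<and> x' i = y i)
          \<and> (\<forall>i\<in>S - A. x i = y i \<and> x' i = y' i)"
    have 1: "y i = merge A x' x i" for i
      using H assms by (cases "i \<in> A"; cases "i \<in> S") (auto simp: merge_def)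
    have 2: "y' i = merge A x x' i" for i
      using H assms by (cases "i \<in> A"; cases "i \<in> S") (auto simp: merge_def)
    show "y = merge A x' x \<and> y' = merge A x x'" using 1 2 by (simp add: fun_eq_iff)
  next
    assume H: "y = merge A x' x \<and> y' = merge A x x'"
    show "(\<forall>i\<in>-S. x i = y i) \<and> (\<forall>i\<in>-S. x' i = y' i) \<and> (\<forall>i\<in>A. x i = y' i \<and> x' i = y i)
          \<and> (\<forall>i\<in>S - A. x i = y i \<and> x' i = y' i)"
      using H assms by (auto simp: merge_def)
  qed
  ultimately show ?thesis by simp
qed

lemma delta2:
  fixes g :: "'a::finite \<Rightarrow> 'b::finite \<Rightarrow> complex"
  shows "(\<Sum>y\<in>UNIV. \<Sum>y'\<in>UNIV. g y y' * (if y = Y \<and> y' = Y' then 1 else (0::complex))) = g Y Y'"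
proof -
  have e: "\<And>y y'. g y y' * (if y = Y \<and> y' = Y' then 1 else (0::complex)) = (if y' = Y' then (if y = Y then g y y' else 0) else 0)"
    by simp
  show ?thesis by (simp only: e sum.delta' sum.delta if_True UNIV_I finite)
qed

lemma expect_Pa:
  fixes \<psi> :: "('n::finite \<Rightarrow> bool) \<Rightarrow> complex"
  shows "(\<Sum>x\<in>UNIV. \<Sum>x'\<in>UNIV. \<Sum>y\<in>UNIV. \<Sum>y'\<in>UNIV.
         Kt \<psi> S x x' y y' * (\<Prod>i\<in>S. Mv (x i) (x' i) (y i) (y' i)))
     = (1/6)^card S * (\<Sum>A\<in>Pow S. Pa \<psi> A)"
proof -
  let ?E1 = "\<lambda>A x x' y y'. (\<Prod>i\<in>A. if x i = y' i \<and> x' i = y i then 1 else 0::complex)"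
  let ?E2 = "\<lambda>A x x' y y'. (\<Prod>i\<in>S - A. if x i = y i \<and> x' i = y' i then 1 else 0::complex)"
  have "(\<Sum>x\<in>UNIV. \<Sum>x'\<in>UNIV. \<Sum>y\<in>UNIV. \<Sum>y'\<in>UNIV.
         Kt \<psi> S x x' y y' * (\<Prod>i\<in>S. Mv (x i) (x' i) (y i) (y' i)))
      = (\<Sum>x\<in>UNIV. \<Sum>x'\<in>UNIV. \<Sum>y\<in>UNIV. \<Sum>y'\<in>UNIV. (1/6)^card S * (\<Sum>A\<in>Pow S.
         Kt \<psi> S x x' y y' * (?E1 A x x' y y' * ?E2 A x x' y y')))"
    by (intro sum.cong refl) (simp only: prod_Mv sum_distrib_left mult.left_commute)
  also have "\<dots> = (\<Sum>x\<in>UNIV. \<Sum>x'\<in>UNIV. \<Sum>y\<in>UNIV. \<Sum>y'\<in>UNIV. \<Sum>A\<in>Pow S. (1/6)^card S * (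
         Kt \<psi> S x x' y y' * (?E1 A x x' y y' * ?E2 A x x' y y')))"
    by (simp only: sum_distrib_left)
  also have "\<dots> = (\<Sum>A\<in>Pow S. \<Sum>x\<in>UNIV. \<Sum>x'\<in>UNIV. \<Sum>y\<in>UNIV. \<Sum>y'\<in>UNIV. (1/6)^card S * (
         Kt \<psi> S x x' y y' * (?E1 A x x' y y' * ?E2 A x x' y y')))"
    by (simp only: sum.swap[of _ _ "Pow S"])
  also have "\<dots> = (1/6)^card S * (\<Sum>A\<in>Pow S. \<Sum>x\<in>UNIV. \<Sum>x'\<in>UNIV. \<Sum>y\<in>UNIV. \<Sum>y'\<in>UNIV.
         Kt \<psi> S x x' y y' * (?E1 A x x' y y' * ?E2 A x x' y y'))"
    by (simp only: sum_distrib_left)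
  also have "\<dots> = (1/6)^card S * (\<Sum>A\<in>Pow S. Pa \<psi> A)"
  proof (intro arg_cong[where f="\<lambda>t. (1/6)^card S * t"] sum.cong refl)
    fix A assume "A \<in> Pow S"
    then have AS: "A \<subseteq> S" by simp
    have "(\<Sum>x\<in>UNIV. \<Sum>x'\<in>UNIV. \<Sum>y\<in>UNIV. \<Sum>y'\<in>UNIV. Kt \<psi> S x x' y y' * (?E1 A x x' y y' * ?E2 A x x' y y'))
      = (\<Sum>x\<in>UNIV. \<Sum>x'\<in>UNIV. \<Sum>y\<in>UNIV. \<Sum>y'\<in>UNIV. (\<psi> y * cnj (\<psi> x) * (\<psi> y' * cnj (\<psi> x'))) *
           (if y = merge A x' x \<and> y' = merge A x x' then 1 else 0))"
    proof (intro sum.cong refl)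
      fix x x' y y' :: "'n \<Rightarrow> bool"
      show "Kt \<psi> S x x' y y' * (?E1 A x x' y y' * ?E2 A x x' y y') = (\<psi> y * cnj (\<psi> x) * (\<psi> y' * cnj (\<psi> x'))) *
           (if y = merge A x' x \<and> y' = merge A x x' then 1 else 0)"
        using collapse[OF AS, of x y x' y'] unfolding Kt_def by (simp only: mult.assoc)
    qed
    also have "\<dots> = Pa \<psi> A" unfolding Pa_def by (simp only: delta2)
    finally show "(\<Sum>x\<in>UNIV. \<Sum>x'\<in>UNIV. \<Sum>y\<in>UNIV. \<Sum>y'\<in>UNIV. Kt \<psi> S x x' y y' * (?E1 A x x' y y' * ?E2 A x x' y y'))
      = Pa \<psi> A" .
  qed
  finally show ?thesis .
qed

lemma merge_bij: "bij_betw (\<lambda>(a, c). merge A a c) (conf A \<times> conf (- A)) UNIV"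
proof (rule bij_betwI')
  fix u v assume uv: "u \<in> conf A \<times> conf (- A)" "v \<in> conf A \<times> conf (- A)"
  obtain a c where u: "u = (a, c)" by (cases u)
  obtain a' c' where v: "v = (a', c')" by (cases v)
  have ca: "\<And>i. i \<notin> A \<Longrightarrow> a i = False" "\<And>i. i \<notin> A \<Longrightarrow> a' i = False"
    "\<And>i. i \<in> A \<Longrightarrow> c i = False" "\<And>i. i \<in> A \<Longrightarrow> c' i = False"
    using uv u v by (auto simp: conf_def)
  have "merge A a c = merge A a' c' \<Longrightarrow> a = a' \<and> c = c'"
  proof -
    assume h: "merge A a c = merge A a' c'"
    have "a i = a' i \<and> c i = c' i" for i
      using fun_cong[OF h, of i] ca[of i] by (cases "i \<in> A") (auto simp: merge_def)
    then show ?thesis by (simp add: fun_eq_iff)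
  qed
  then show "((case u of (a, c) \<Rightarrow> merge A a c) = (case v of (a, c) \<Rightarrow> merge A a c)) = (u = v)"
    using u v by auto
next
  fix u assume "u \<in> conf A \<times> conf (- A)"
  then show "(case u of (a, c) \<Rightarrow> merge A a c) \<in> UNIV" by simp
next
  fix x :: "'a \<Rightarrow> bool"
  show "\<exists>u\<in>conf A \<times> conf (- A). x = (case u of (a, c) \<Rightarrow> merge A a c)"
    by (rule bexI[where x="(\<lambda>i. i \<in> A \<and> x i, \<lambda>i. i \<notin> A \<and> x i)"])
       (auto simp: merge_def conf_def fun_eq_iff)
qed

lemma sum_merge:
  fixes g :: "('n::finite \<Rightarrow> bool) \<Rightarrow> complex"
  shows "(\<Sum>x\<in>UNIV. g x) = (\<Sum>a\<in>conf A. \<Sum>c\<in>conf (- A). g (merge A a c))"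
proof -
  have "(\<Sum>x\<in>UNIV. g x) = (\<Sum>u\<in>conf A \<times> conf (- A). g ((\<lambda>(a, c). merge A a c) u))"
    by (rule sum.reindex_bij_betw[OF merge_bij, symmetric])
  also have "\<dots> = (\<Sum>a\<in>conf A. \<Sum>c\<in>conf (- A). g (merge A a c))"
    by (simp add: sum.cartesian_product split_def)
  finally show ?thesis .
qed

lemma merge_mm1: "merge A (merge A b c) (merge A a c') = merge A b c'"
  by (simp add: merge_def fun_eq_iff)

lemma purity_Pa:
  fixes \<psi> :: "('n::finite \<Rightarrow> bool) \<Rightarrow> complex"
  assumes "A \<noteq> {}"
  shows "purity \<psi> A = Pa \<psi> A"
proof -
  let ?m = "merge A"
  have "Pa \<psi> A = (\<Sum>a\<in>conf A. \<Sum>c'\<in>conf (- A). \<Sum>b\<in>conf A. \<Sum>c\<in>conf (- A).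
     \<psi> (?m (?m b c) (?m a c')) * cnj (\<psi> (?m a c')) * (\<psi> (?m (?m a c') (?m b c)) * cnj (\<psi> (?m b c))))"
    unfolding Pa_def by (simp only: sum_merge[where A=A])
  also have "\<dots> = (\<Sum>a\<in>conf A. \<Sum>c'\<in>conf (- A). \<Sum>b\<in>conf A. \<Sum>c\<in>conf (- A).
     \<psi> (?m b c') * cnj (\<psi> (?m a c')) * (\<psi> (?m a c) * cnj (\<psi> (?m b c))))"
    by (simp only: merge_mm1)
  also have "\<dots> = (\<Sum>a\<in>conf A. \<Sum>b\<in>conf A. \<Sum>c'\<in>conf (- A). \<Sum>c\<in>conf (- A).
     \<psi> (?m b c') * cnj (\<psi> (?m a c')) * (\<psi> (?m a c) * cnj (\<psi> (?m b c))))"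
    by (rule sum.cong[OF refl], rule sum.swap)
  also have "\<dots> = (\<Sum>a\<in>conf A. \<Sum>b\<in>conf A. \<Sum>c\<in>conf (- A). \<Sum>c'\<in>conf (- A).
     \<psi> (?m b c') * cnj (\<psi> (?m a c')) * (\<psi> (?m a c) * cnj (\<psi> (?m b c))))"
    by (rule sum.cong[OF refl], rule sum.cong[OF refl], rule sum.swap)
  also have "\<dots> = purity \<psi> A"
    unfolding purity_def reduced_def using assms
    by (simp add: sum_product mult_ac)
  finally show ?thesis by simp
qed

lemma Pa_empty:
  fixes \<psi> :: "('n::finite \<Rightarrow> bool) \<Rightarrow> complex"
  assumes "(\<Sum>x\<in>UNIV. (cmod (\<psi> x))^2) = 1"
  shows "Pa \<psi> {} = 1"
proof -
  have m: "merge {} a c = c" for a c :: "'n \<Rightarrow> bool" by (simp add: merge_def)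
  have s: "(\<Sum>x\<in>UNIV. \<psi> x * cnj (\<psi> x)) = 1"
  proof -
    have "(\<Sum>x\<in>UNIV. \<psi> x * cnj (\<psi> x)) = (\<Sum>x\<in>UNIV. complex_of_real ((cmod (\<psi> x))^2))"
      by (intro sum.cong refl) (metis complex_norm_square of_real_power)
    also have "\<dots> = complex_of_real (\<Sum>x\<in>UNIV. (cmod (\<psi> x))^2)" by simp
    finally show ?thesis using assms by simp
  qed
  have "Pa \<psi> {} = (\<Sum>x\<in>UNIV. \<psi> x * cnj (\<psi> x)) * (\<Sum>x'\<in>UNIV. \<psi> x' * cnj (\<psi> x'))"
    unfolding Pa_def m by (simp add: sum_product mult_ac)
  then show ?thesis using s by simp
qed

theorem theorem3:
  fixes \<psi> :: "('n::finite \<Rightarrow> bool) \<Rightarrow> complex" and S :: "'n set"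
    and N :: nat and p :: "nat \<Rightarrow> real" and \<phi> :: "nat \<Rightarrow> bool \<Rightarrow> complex"
  assumes "(\<Sum>x\<in>UNIV. (cmod (\<psi> x))^2) = 1"
    and "S \<noteq> {}"
    and "is_2design N p \<phi>"
  shows "conc_ent \<psi> S = 1 - 3 ^ card S *
           (\<Sum>q\<in>PiE S (\<lambda>_. {1..N}). of_real (\<Prod>i\<in>S. p (q i)) * (tr_proj \<psi> S \<phi> q)^2)"
proof -
  have des: "\<And>a b c d. (\<Sum>j=1..N. of_real (p j) * Qp \<phi> j a b c d) = Mv a b c d"
    using assms(3) unfolding is_2design_def Qp_def Mv_def haar_val by blast
  have E: "(\<Sum>q\<in>PiE S (\<lambda>_. {1..N}). of_real (\<Prod>i\<in>S. p (q i)) * (tr_proj \<psi> S \<phi> q)^2)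
      = (1/6)^card S * (\<Sum>A\<in>Pow S. Pa \<psi> A)"
    using expect_expand[OF des, of S \<psi>] expect_Pa[of \<psi> S] by simp
  have P: "(\<Sum>A\<in>Pow S. purity \<psi> A) = (\<Sum>A\<in>Pow S. Pa \<psi> A)"
  proof (rule sum.cong[OF refl])
    fix A assume "A \<in> Pow S"
    show "purity \<psi> A = Pa \<psi> A"
    proof (cases "A = {}")
      case True
      then show ?thesis using Pa_empty[OF assms(1)] by (simp add: purity_def)
    next
      case False
      then show ?thesis by (rule purity_Pa)
    qed
  qed
  have c: "(3::complex) ^ card S * (1/6)^card S = 1 / 2 ^ card S"
  proof -
    have "(3::complex) ^ card S * (1/6)^card S = (3 * (1/6)) ^ card S"
      by (rule power_mult_distrib[symmetric])
    also have "(3 * (1/6)::complex) = 1/2" by simp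
    finally show ?thesis by (simp add: power_divide)
  qed
  show ?thesis
    unfolding conc_ent_def E P by (simp add: mult.assoc[symmetric] c)
qed

end
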